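(* There is a constant $c>0$ such that for every integer $\kappa\ge 1$ (large enough), every $\frac{\kappa+1}{\kappa}$-APLS for the minimum edge cover problem on graphs of odd-girth at least $2\kappa+1$ has proof size at least $c\log\kappa$; i.e., the proof size is $\Omega(\log\kappa)$.
   Context: All graphs are finite, connected and undirected, $G=(V,E)$, $n=|V|$, $N(v)$ is the set of neighbors of $v$; each node distinguishes its incident edges by port numbers $1,\dots,|N(v)|$. An input assignment $\mathsf{I}:V\to\{0,1\}^*$ and an output assignment $\mathsf{O}:V\to\{0,1\}^*$ give each node a local input and a local output. A configuration graph is a pair $\langle G,S\rangle$ with $S:V\to\{0,1\}^*$; an IO graph $\langle G,\mathsf I,\mathsf O\rangle$ (with $S(v)=\mathsf I(v)\cdot\mathsf O(v)$) is a configuration graph. Given a universe $\mathcal U$ of configuration graphs and disjoint families $\mathcal F_Y,\mathcal F_N\subseteq\mathcal U$, a gap proof labeling scheme (GPLS) consists of a prover which, given a configuration graph in $\mathcal F_Y$, assigns a label $L(v)\in\{0,1\}^*$ to every node, and a verifier which at each node $v$ receives only $\langle S(v),L(v),L^N(v)\rangle$, where $L^N(v)$ is the vector of labels of $v$'s neighbors (indexed by port), and outputs True or False; the verifier accepts if all nodes output True and rejects otherwise. The GPLS is correct if (i) for every configuration graph in $\mathcal F_Y$ the verifier accepts under the prover's labels, and (ii) for every configuration graph in $\mathcal F_N$ the verifier rejects under every label assignment; nothing is required for other configuration graphs. Its proof size is the maximum label length assigned by the prover over configuration graphs in $\mathcal F_Y$. A distributed graph optimization problem $\Psi=\langle\Pi,f\rangle$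 consists of a set $\Pi$ of IO graphs and an integer-valued objective $f$ on $\Pi$; $\langle G,\mathsf I\rangle$ is legal if some $\mathsf O$ has $\langle G,\mathsf I,\mathsf O\rangle\in\Pi$ (a feasible solution); $OPT_\Psi(G,\mathsf I)$ is the infimum (minimization) or supremum (maximization) of $f$ over feasible solutions. For $\alpha\ge 1$, an $\alpha$-APLS for $\Psi$ is a GPLS over $\mathcal U=\{\langle G,\mathsf I,\mathsf O\rangle:\langle G,\mathsf I\rangle\text{ legal}\}$ with $\mathcal F_Y$ the IO graphs in $\Pi$ with $f=OPT_\Psi(G,\mathsf I)$, and $\mathcal F_N$ equal to $\mathcal U$ minus the IO graphs in $\Pi$ with $f\le\alpha\cdot OPT_\Psi(G,\mathsf I)$ (minimization) resp. $f\ge OPT_\Psi(G,\mathsf I)/\alpha$ (maximization). Restricting to a graph family means the universe contains only IO graphs whose underlying graph lies in the family. Minimum edge cover: the output assignment encodes a set $C\subseteq E$; it is feasible iff $C$ is an edge cover (every node is incident on an edge of $C$), and $f=|C|$ is minimized. The odd-girth of a graph is the length of its shortest odd cycle ($\infty$ if there is none). *)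

theory Defs
  imports Complex_Main "HOL-Library.Extended_Real"
begin

(* A port-numbered graph: vertex set V (finite, nonempty) and for each node v the
   list nb v of its neighbours, ordered by port number (port i+1 = index i). *)
definition port_graph :: "nat set \<Rightarrow> (nat \<Rightarrow> nat list) \<Rightarrow> bool" where
  "port_graph V nb \<longleftrightarrow> finite V \<and> V \<noteq> {} \<and>
     (\<forall>v\<in>V. distinct (nb v) \<and> set (nb v) \<subseteq> V \<and> v \<notin> set (nb v)) \<and>
     (\<forall>v\<in>V. \<forall>w\<in>V. w \<in> set (nb v) \<longleftrightarrow> v \<in> set (nb w)) \<and>
     (\<forall>u\<in>V. \<forall>w\<in>V. (\<lambda>x y. y \<in> set (nb x))\<^sup>*\<^sup>* u w)"

definition is_cycle :: "nat set \<Rightarrow> (nat \<Rightarrow> nat list) \<Rightarrow> nat list \<Rightarrow> bool" where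
  "is_cycle V nb cs \<longleftrightarrow> length cs \<ge> 3 \<and> distinct cs \<and> set cs \<subseteq> V \<and>
     (\<forall>i < length cs - 1. cs ! Suc i \<in> set (nb (cs ! i))) \<and>
     hd cs \<in> set (nb (last cs))"

definition odd_girth_ge :: "nat set \<Rightarrow> (nat \<Rightarrow> nat list) \<Rightarrow> nat \<Rightarrow> bool" where
  "odd_girth_ge V nb g \<longleftrightarrow>
     (\<forall>cs. is_cycle V nb cs \<and> odd (length cs) \<longrightarrow> length cs \<ge> g)"

(* Verifier at v sees (S v, L v, labels of neighbours in port order). *)
type_synonym verifier = "bool list \<Rightarrow> bool list \<Rightarrow> bool list list \<Rightarrow> bool"
type_synonym prover = "nat set \<Rightarrow> (nat \<Rightarrow> nat list) \<Rightarrow> (nat \<Rightarrow> bool list) \<Rightarrow> (nat \<Rightarrow> bool list)"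
type_synonym family = "nat set \<Rightarrow> (nat \<Rightarrow> nat list) \<Rightarrow> (nat \<Rightarrow> bool list) \<Rightarrow> bool"

definition accepts :: "verifier \<Rightarrow> nat set \<Rightarrow> (nat \<Rightarrow> nat list) \<Rightarrow> (nat \<Rightarrow> bool list)
     \<Rightarrow> (nat \<Rightarrow> bool list) \<Rightarrow> bool" where
  "accepts D V nb S L \<longleftrightarrow> (\<forall>v\<in>V. D (S v) (L v) (map L (nb v)))"

definition gpls :: "family \<Rightarrow> family \<Rightarrow> prover \<Rightarrow> verifier \<Rightarrow> bool" where
  "gpls FY FN P D \<longleftrightarrow>
     (\<forall>V nb S. FY V nb S \<longrightarrow> accepts D V nb S (P V nb S)) \<and>
     (\<forall>V nb S. FN V nb S \<longrightarrow> (\<forall>L. \<not> accepts D V nb S L))"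

definition proof_size :: "family \<Rightarrow> prover \<Rightarrow> ereal" where
  "proof_size FY P = (SUP x \<in> {(V, nb, S, v). FY V nb S \<and> v \<in> V}.
      (case x of (V, nb, S, v) \<Rightarrow> ereal (real (length (P V nb S v)))))"

(* Minimum edge cover. The (empty) input is I v = []; the output Out v is a bit string
   of length deg v, bit i telling whether the edge at port i+1 is in C. *)
definition ec_input :: "nat \<Rightarrow> bool list" where "ec_input v = []"

definition ec_feasible :: "nat set \<Rightarrow> (nat \<Rightarrow> nat list) \<Rightarrow> (nat \<Rightarrow> bool list) \<Rightarrow> bool" where
  "ec_feasible V nb Out \<longleftrightarrow>
     (\<forall>v\<in>V. length (Out v) = length (nb v)) \<and>
     (\<forall>v\<in>V. \<forall>i j. i < length (nb v) \<and> j < length (nb (nb v ! i)) \<and> nb (nb v ! i) ! j = v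
                \<longrightarrow> Out v ! i = Out (nb v ! i) ! j) \<and>
     (\<forall>v\<in>V. \<exists>i < length (nb v). Out v ! i)"

definition ec_set :: "nat set \<Rightarrow> (nat \<Rightarrow> nat list) \<Rightarrow> (nat \<Rightarrow> bool list) \<Rightarrow> nat set set" where
  "ec_set V nb Out = {{v, nb v ! i} | v i. v \<in> V \<and> i < length (nb v) \<and> Out v ! i}"

definition ec_f :: "nat set \<Rightarrow> (nat \<Rightarrow> nat list) \<Rightarrow> (nat \<Rightarrow> bool list) \<Rightarrow> nat" where
  "ec_f V nb Out = card (ec_set V nb Out)"

definition ec_legal :: "nat set \<Rightarrow> (nat \<Rightarrow> nat list) \<Rightarrow> bool" where
  "ec_legal V nb \<longleftrightarrow> (\<exists>Out. ec_feasible V nb Out)"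

definition ec_OPT :: "nat set \<Rightarrow> (nat \<Rightarrow> nat list) \<Rightarrow> nat" where
  "ec_OPT V nb = Inf {ec_f V nb Out | Out. ec_feasible V nb Out}"

definition io_config :: "(nat \<Rightarrow> bool list) \<Rightarrow> (nat \<Rightarrow> bool list) \<Rightarrow> nat \<Rightarrow> bool list" where
  "io_config I Out = (\<lambda>v. I v @ Out v)"

definition ec_universe :: "nat \<Rightarrow> nat set \<Rightarrow> (nat \<Rightarrow> nat list) \<Rightarrow> (nat \<Rightarrow> bool list) \<Rightarrow> bool" where
  "ec_universe g V nb Out \<longleftrightarrow> port_graph V nb \<and> odd_girth_ge V nb g \<and> ec_legal V nb"

definition ec_FY :: "nat \<Rightarrow> family" where
  "ec_FY g V nb S \<longleftrightarrow> (\<exists>Out. S = io_config ec_input Out \<and> ec_universe g V nb Out \<and>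
       ec_feasible V nb Out \<and> ec_f V nb Out = ec_OPT V nb)"

definition ec_FN :: "nat \<Rightarrow> real \<Rightarrow> family" where
  "ec_FN g \<alpha> V nb S \<longleftrightarrow> (\<exists>Out. S = io_config ec_input Out \<and> ec_universe g V nb Out \<and>
       \<not> (ec_feasible V nb Out \<and> real (ec_f V nb Out) \<le> \<alpha> * real (ec_OPT V nb)))"

definition ec_APLS :: "nat \<Rightarrow> real \<Rightarrow> prover \<Rightarrow> verifier \<Rightarrow> bool" where
  "ec_APLS g \<alpha> P D \<longleftrightarrow> gpls (ec_FY g) (ec_FN g \<alpha>) P D"

end

theory Submission
  imports Defs
begin

definition pr :: "nat \<Rightarrow> nat \<Rightarrow> nat" where "pr n v = (if v = 0 then n - 1 else v - 1)"
definition sc :: "nat \<Rightarrow> nat \<Rightarrow> nat" where "sc n v = (if Suc v = n then 0 else Suc v)"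
definition cnb :: "nat \<Rightarrow> nat \<Rightarrow> nat list" where "cnb n v = [pr n v, sc n v]"

lemma pr_lt: "v < n \<Longrightarrow> pr n v < n" by (auto simp add: pr_def)
lemma sc_lt: "v < n \<Longrightarrow> sc n v < n" by (simp add: sc_def)
lemma pr_sc: "v < n \<Longrightarrow> pr n (sc n v) = v" by (auto simp add: pr_def sc_def)
lemma sc_pr: "v < n \<Longrightarrow> sc n (pr n v) = v" by (auto simp add: pr_def sc_def)
lemma pr_ne_sc: "v < n \<Longrightarrow> 3 \<le> n \<Longrightarrow> pr n v \<noteq> sc n v" by (auto simp add: pr_def sc_def)
lemma pr_ne: "v < n \<Longrightarrow> 2 \<le> n \<Longrightarrow> pr n v \<noteq> v" by (auto simp add: pr_def)
lemma sc_ne: "v < n \<Longrightarrow> 2 \<le> n \<Longrightarrow> sc n v \<noteq> v" by (auto simp add: sc_def)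
lemma pr_pr: "v < n \<Longrightarrow> 3 \<le> n \<Longrightarrow> pr n (pr n v) \<noteq> v" by (auto simp add: pr_def)
lemma sc_sc: "v < n \<Longrightarrow> 3 \<le> n \<Longrightarrow> sc n (sc n v) \<noteq> v" by (auto simp add: sc_def)
lemma sc_mod: "sc n (i mod n) = Suc i mod n" if "0 < n"
  using that by (simp add: sc_def mod_Suc)
lemma pr_mod: "pr n (Suc i mod n) = i mod n" if "0 < n"
  using that by (auto simp add: pr_def mod_Suc)

lemma cyc_port_graph: assumes "3 \<le> n" shows "port_graph {..<n} (cnb n)"
proof -
  let ?R = "\<lambda>x y. y \<in> set (cnb n x)"
  have a: "?R\<^sup>*\<^sup>* 0 w" if "w < n" for w
    using that
  proof (induction w)
    case 0 then show ?case by simp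
  next
    case (Suc w)
    then have "?R w (Suc w)" by (simp add: cnb_def sc_def)
    with Suc show ?case by (meson Suc_lessD rtranclp.rtrancl_into_rtrancl)
  qed
  have b: "?R\<^sup>*\<^sup>* u 0" if "u < n" for u
    using that
  proof (induction u)
    case 0 then show ?case by simp
  next
    case (Suc u)
    then have "?R (Suc u) u" by (simp add: cnb_def pr_def)
    with Suc show ?case by (meson Suc_lessD converse_rtranclp_into_rtranclp)
  qed
  have conn: "?R\<^sup>*\<^sup>* u w" if "u < n" "w < n" for u w
    using a[OF that(2)] b[OF that(1)] by (meson rtranclp_trans)
  show ?thesis unfolding port_graph_def
    using assms conn
    by (auto simp: cnb_def pr_lt sc_lt pr_ne_sc pr_ne sc_ne pr_def sc_def lessThan_empty_iff split: if_splits)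
qed

lemma adj_dvd: assumes "x < n" "y \<in> set (cnb n x)"
  shows "int n dvd (int y - int x - (if y = sc n x then 1 else -1))"
proof (cases "y = sc n x")
  case True
  show ?thesis
  proof (cases "Suc x = n")
    case T2: True
    then have "int y - int x - 1 = - int n" using True by (simp add: sc_def)
    then show ?thesis using True by simp
  next
    case False
    then show ?thesis using True by (simp add: sc_def)
  qed
next
  case False
  then have "y = pr n x" using assms by (auto simp: cnb_def)
  then show ?thesis using False assms by (cases "x = 0") (auto simp: pr_def of_nat_diff)
qed

lemma parity_sum: assumes "\<forall>i<L. d i = 1 \<or> d i = (-1::int)"
  shows "even (sum d {..<L} - int L)"
  using assms
proof (induction L)
  case 0 then show ?case by simp
next
  case (Suc L)
  then have "even (sum d {..<L} - int L)" by auto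
  moreover have "d L = 1 \<or> d L = -1" using Suc.prems by auto
  ultimately show ?case by auto
qed

lemma abs_sum_pm: assumes "\<forall>i<L. d i = 1 \<or> d i = (-1::int)"
  shows "\<bar>sum d {..<L}\<bar> \<le> int L"
proof -
  have "\<bar>sum d {..<L}\<bar> \<le> (\<Sum>i<L. \<bar>d i\<bar>)" by (rule sum_abs)
  also have "\<dots> = (\<Sum>i<L. 1)" using assms by (intro sum.cong) auto
  finally show ?thesis by simp
qed

lemma cyc_odd_girth: assumes "3 \<le> n" "g \<le> n" shows "odd_girth_ge {..<n} (cnb n) g"
  unfolding odd_girth_ge_def
proof (intro allI impI, elim conjE)
  fix cs assume cyc: "is_cycle {..<n} (cnb n) cs" and odd: "odd (length cs)"
  define L where "L = length cs"
  have L3: "3 \<le> L" using cyc by (simp add: is_cycle_def L_def)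
  have inV: "cs ! i < n" if "i < L" for i
  proof -
    have "cs ! i \<in> set cs" using that L_def by simp
    then show ?thesis using cyc by (auto simp: is_cycle_def)
  qed
  have adj: "cs ! (Suc i mod L) \<in> set (cnb n (cs ! i))" if "i < L" for i
  proof (cases "Suc i < L")
    case True
    then have "i < length cs - 1" by (simp add: L_def)
    then show ?thesis using cyc True by (simp add: is_cycle_def)
  next
    case False
    then have "Suc i = L" using that by simp
    then have i: "i = L - 1" "Suc i mod L = 0" by auto
    have "cs \<noteq> []" using L3 L_def by auto
    then have "hd cs = cs ! 0" "last cs = cs ! (L - 1)" by (auto simp: hd_conv_nth last_conv_nth L_def)
    then show ?thesis using cyc i by (simp add: is_cycle_def)
  qed
  define d where "d i = (if cs ! (Suc i mod L) = sc n (cs ! i) then 1 else (-1::int))" for i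
  have pm: "\<forall>i<L. d i = 1 \<or> d i = -1" by (simp add: d_def)
  have dv: "int n dvd (int (cs ! (Suc i mod L)) - int (cs ! i) - d i)" if "i < L" for i
    using adj_dvd[OF inV[OF that] adj[OF that]] by (simp add: d_def)
  define f where "f i = int (cs ! (i mod L))" for i
  have "(\<Sum>i<L. int (cs ! (Suc i mod L)) - int (cs ! i)) = (\<Sum>i<L. f (Suc i) - f i)"
    by (intro sum.cong) (auto simp: f_def)
  also have "\<dots> = f L - f 0" by (rule sum_lessThan_telescope)
  also have "\<dots> = 0" by (simp add: f_def)
  finally have s0: "(\<Sum>i<L. int (cs ! (Suc i mod L)) - int (cs ! i)) = 0" .
  have "int n dvd (\<Sum>i<L. int (cs ! (Suc i mod L)) - int (cs ! i) - d i)"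
    using dv by (intro dvd_sum) auto
  also have "(\<Sum>i<L. int (cs ! (Suc i mod L)) - int (cs ! i) - d i) = - sum d {..<L}"
    using s0 by (simp add: sum_subtractf)
  finally have ndv: "int n dvd sum d {..<L}" by simp
  have "even (sum d {..<L} - int L)" using parity_sum[OF pm] .
  then have "odd (sum d {..<L})" using odd L_def by auto
  then have nz: "sum d {..<L} \<noteq> 0" by auto
  have "\<bar>int n\<bar> \<le> \<bar>sum d {..<L}\<bar>" using dvd_imp_le_int[OF nz ndv] .
  then have "int n \<le> int L" using abs_sum_pm[OF pm] by linarith
  then show "g \<le> length cs" using assms L_def by linarith
qed

lemma ec_set_sub: "ec_set {..<n} (cnb n) Out \<subseteq> (\<lambda>(v,i). {v, cnb n v ! i}) ` ({..<n} \<times> {..<2})"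
  by (auto simp: ec_set_def cnb_def)

lemma ec_set_finite: "finite (ec_set {..<n} (cnb n) Out)"
  by (rule finite_subset[OF ec_set_sub]) auto

lemma ec_f_lower: assumes "3 \<le> n"
  shows "card {v. v < n \<and> Out v ! 1} \<le> ec_f {..<n} (cnb n) Out"
proof -
  have inj: "inj_on (\<lambda>v. {v, sc n v}) {v. v < n \<and> Out v ! 1}"
  proof (rule inj_onI)
    fix v w assume v: "v \<in> {v. v < n \<and> Out v ! 1}" and w: "w \<in> {v. v < n \<and> Out v ! 1}"
      and eq: "{v, sc n v} = {w, sc n w}"
    show "v = w"
    proof (rule ccontr)
      assume "v \<noteq> w"
      then have "v = sc n w" "w = sc n v" using eq by (auto simp: doubleton_eq_iff)
      then show False using sc_sc[of v n] v assms by simp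
    qed
  qed
  have sub: "(\<lambda>v. {v, sc n v}) ` {v. v < n \<and> Out v ! 1} \<subseteq> ec_set {..<n} (cnb n) Out"
    unfolding ec_set_def by (auto simp: cnb_def) (metis One_nat_def lessI nth_Cons_0 nth_Cons_Suc)
  have "card {v. v < n \<and> Out v ! 1} = card ((\<lambda>v. {v, sc n v}) ` {v. v < n \<and> Out v ! 1})"
    using inj by (simp add: card_image)
  also have "\<dots> \<le> ec_f {..<n} (cnb n) Out"
    unfolding ec_f_def by (rule card_mono[OF ec_set_finite sub])
  finally show ?thesis .
qed

definition Out0 :: "nat \<Rightarrow> nat \<Rightarrow> bool list" where "Out0 n v = [even (pr n v), even v]"

lemma Out0_feasible: assumes "3 \<le> n" shows "ec_feasible {..<n} (cnb n) (Out0 n)"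
  unfolding ec_feasible_def
proof (intro conjI ballI allI impI)
  fix v assume "v \<in> {..<n}"
  then show "length (Out0 n v) = length (cnb n v)" by (simp add: Out0_def cnb_def)
next
  fix v assume "v \<in> {..<n}"
  then have v: "v < n" by simp
  show "\<exists>i<length (cnb n v). Out0 n v ! i"
  proof (cases "v = 0")
    case True then show ?thesis by (rule_tac x=1 in exI) (simp add: Out0_def cnb_def)
  next
    case False
    then have "even (pr n v) \<or> even v" by (auto simp: pr_def)
    then show ?thesis by (auto simp: Out0_def cnb_def)
  qed
next
  fix v i j assume "v \<in> {..<n}" and h: "i < length (cnb n v) \<and> j < length (cnb n (cnb n v ! i)) \<and> cnb n (cnb n v ! i) ! j = v"
  then have v: "v < n" by simp
  have i: "i = 0 \<or> i = 1" and j: "j = 0 \<or> j = 1" using h by (auto simp: cnb_def)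
  show "Out0 n v ! i = Out0 n (cnb n v ! i) ! j"
    using i j h v assms pr_pr[of v n] sc_sc[of v n] by (auto simp: cnb_def Out0_def pr_sc sc_pr)
qed

lemma Out0_f: assumes "3 \<le> n" shows "ec_f {..<n} (cnb n) (Out0 n) \<le> (n + 1) div 2"
proof -
  have sub: "ec_set {..<n} (cnb n) (Out0 n) \<subseteq> (\<lambda>v. {v, sc n v}) ` ((\<lambda>j. 2 * j) ` {..<(n+1) div 2})"
  proof
    fix e assume "e \<in> ec_set {..<n} (cnb n) (Out0 n)"
    then obtain v i where e: "e = {v, cnb n v ! i}" "v < n" "i < 2" "Out0 n v ! i"
      by (auto simp: ec_set_def cnb_def)
    show "e \<in> (\<lambda>v. {v, sc n v}) ` ((\<lambda>j. 2 * j) ` {..<(n+1) div 2})"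
    proof (cases "i = 0")
      case True
      then have ev: "even (pr n v)" and ee: "e = {pr n v, sc n (pr n v)}" using e by (auto simp: Out0_def cnb_def sc_pr)
      have "pr n v < n" using e pr_lt by auto
      then have "pr n v \<in> (\<lambda>j. 2 * j) ` {..<(n+1) div 2}" using ev by (auto elim!: evenE)
      then show ?thesis using ee by auto
    next
      case False
      then have "i = 1" using e by auto
      then have ev: "even v" and ee: "e = {v, sc n v}" using e by (auto simp: Out0_def cnb_def)
      have "v \<in> (\<lambda>j. 2 * j) ` {..<(n+1) div 2}" using ev e by (auto elim!: evenE)
      then show ?thesis using ee by auto
    qed
  qed
  have "ec_f {..<n} (cnb n) (Out0 n) \<le> card ((\<lambda>v. {v, sc n v}) ` ((\<lambda>j. 2 * j) ` {..<(n+1) div 2}))"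
    unfolding ec_f_def by (rule card_mono[OF _ sub]) auto
  also have "\<dots> \<le> card ((\<lambda>j. 2 * j) ` {..<(n+1) div 2})" by (rule card_image_le) auto
  also have "\<dots> \<le> (n+1) div 2" by (metis card_image_le card_lessThan finite_lessThan)
  finally show ?thesis .
qed

lemma OPT_le: assumes "3 \<le> n" shows "ec_OPT {..<n} (cnb n) \<le> (n + 1) div 2"
proof -
  have "ec_OPT {..<n} (cnb n) \<le> ec_f {..<n} (cnb n) (Out0 n)"
    unfolding ec_OPT_def using Out0_feasible[OF assms] by (intro cInf_lower) auto
  then show ?thesis using Out0_f[OF assms] by linarith
qed

lemma cyc_legal: "3 \<le> n \<Longrightarrow> ec_legal {..<n} (cnb n)"
  using Out0_feasible unfolding ec_legal_def by blast

lemma feas_props: assumes "ec_feasible {..<n} (cnb n) Out" "v < n"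
  shows "length (Out v) = 2" "Out v ! 1 = Out (sc n v) ! 0" "Out v ! 0 \<or> Out v ! 1"
proof -
  show "length (Out v) = 2" using assms by (simp add: ec_feasible_def cnb_def)
  have "sc n v < n" using assms sc_lt by auto
  then show "Out v ! 1 = Out (sc n v) ! 0"
  proof -
    have "\<forall>i j. i < length (cnb n v) \<and> j < length (cnb n (cnb n v ! i)) \<and> cnb n (cnb n v ! i) ! j = v
                \<longrightarrow> Out v ! i = Out (cnb n v ! i) ! j" using assms unfolding ec_feasible_def by auto
    then have "1 < length (cnb n v) \<and> 0 < length (cnb n (cnb n v ! 1)) \<and> cnb n (cnb n v ! 1) ! 0 = v
                \<longrightarrow> Out v ! 1 = Out (cnb n v ! 1) ! 0" by blast
    then show ?thesis using assms by (simp add: cnb_def pr_sc)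
  qed
  have "\<exists>i<length (cnb n v). Out v ! i" using assms unfolding ec_feasible_def by auto
  then obtain i where "i < 2" "Out v ! i" by (auto simp: cnb_def numeral_2_eq_2)
  then show "Out v ! 0 \<or> Out v ! 1" by (cases i) auto
qed

lemma odd_walk_short:
  fixes A :: "'a set" and R :: "'a \<Rightarrow> 'a \<Rightarrow> bool"
  assumes "finite A" "\<forall>i\<le>N. w i \<in> A" "\<forall>i<N. R (w i) (w (Suc i))" "w N = w 0" "odd N"
  shows "\<exists>q l. odd l \<and> l \<le> card A \<and> (\<forall>i<l. R (q i) (q (Suc i))) \<and> q l = q 0"
  using assms(2-)
proof (induction N arbitrary: w rule: less_induct)
  case (less N)
  show ?case
  proof (cases "N \<le> card A")
    case True then show ?thesis using less.prems by blast
  next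
    case False
    have "\<not> inj_on w {..card A}"
    proof
      assume "inj_on w {..card A}"
      then have c: "card (w ` {..card A}) = card A + 1" by (simp add: card_image)
      have "w ` {..card A} \<subseteq> A" using less.prems(1) False by auto
      then have "card (w ` {..card A}) \<le> card A" by (rule card_mono[OF assms(1)])
      then show False using c by simp
    qed
    then obtain a b where ab: "a \<le> card A" "b \<le> card A" "a \<noteq> b" "w a = w b"
      unfolding inj_on_def by auto
    obtain a b where ab: "a < b" "b \<le> card A" "w a = w b"
    proof (cases "a < b")
      case True then show ?thesis using ab that by blast
    next
      case False then have "b < a" using ab(3) by simp
      then show ?thesis using ab(1,2,4) that[of b a] by simp
    qed
    have bN: "b < N" using ab False by auto
    show ?thesis
    proof (cases "odd (b - a)")
      case True
      have "\<exists>q l. odd l \<and> l \<le> card A \<and> (\<forall>i<l. R (q i) (q (Suc i))) \<and> q l = q 0"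
      proof -
        have h1: "b - a < N" using ab bN by simp
        have h2: "\<forall>i\<le>b - a. (\<lambda>i. w (a + i)) i \<in> A" using less.prems(1) ab bN by simp
        have h3: "\<forall>i<b - a. R ((\<lambda>i. w (a + i)) i) ((\<lambda>i. w (a + i)) (Suc i))" using less.prems(2) ab bN by simp
        have h4: "(\<lambda>i. w (a + i)) (b - a) = (\<lambda>i. w (a + i)) 0" using ab by simp
        show ?thesis by (rule less.IH[OF h1 h2 h3 h4 True])
      qed
      then show ?thesis .
    next
      case False
      define M where "M = N - (b - a)"
      have oddM: "odd M" using False less.prems(4) ab bN by (simp add: M_def)
      define w2 where "w2 i = (if i \<le> a then w i else w (i + (b - a)))" for i
      have "\<exists>q l. odd l \<and> l \<le> card A \<and> (\<forall>i<l. R (q i) (q (Suc i))) \<and> q l = q 0"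
      proof (rule less.IH[of M w2])
        show "M < N" using ab bN by (simp add: M_def)
        show "\<forall>i\<le>M. w2 i \<in> A" using less.prems(1) ab bN by (auto simp: w2_def M_def)
        show "\<forall>i<M. R (w2 i) (w2 (Suc i))"
        proof (intro allI impI)
          fix i assume i: "i < M"
          consider "i < a" | "i = a" | "a < i" by linarith
          then show "R (w2 i) (w2 (Suc i))"
          proof cases
            case 1 then show ?thesis using less.prems(2) ab bN by (auto simp: w2_def)
          next
            case 2
            then have "w2 i = w b" "w2 (Suc i) = w (Suc b)" using ab by (auto simp: w2_def)
            then show ?thesis using less.prems(2) bN by auto
          next
            case 3
            then have "w2 i = w (i + (b - a))" "w2 (Suc i) = w (Suc (i + (b - a)))" by (auto simp: w2_def)
            moreover have "i + (b - a) < N" using i ab bN by (simp add: M_def)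
            ultimately show ?thesis using less.prems(2) by auto
          qed
        qed
        have "a < M" using ab bN by (simp add: M_def)
        then have "w2 M = w N" using ab bN by (simp add: w2_def M_def)
        then show "w2 M = w2 0" using less.prems(3) by (simp add: w2_def)
        show "odd M" by (rule oddM)
      qed
      then show ?thesis .
    qed
  qed
qed

lemma periodic_walk:
  assumes "0 < l" "\<forall>i<l. R (q i) (q (Suc i))" "q l = q 0"
  shows "R (q (j mod l)) (q (Suc j mod l))"
proof (cases "Suc (j mod l) = l")
  case True
  then have "Suc j mod l = 0" by (metis mod_Suc)
  then show ?thesis using assms True by (metis lessI)
next
  case False
  then have "Suc j mod l = Suc (j mod l)" by (metis mod_Suc)
  moreover have "j mod l < l" using assms by simp
  ultimately show ?thesis using assms by auto
qed

lemma card_periodic: "card {v. v < k * l \<and> P (v mod l)} = k * card {j. j < l \<and> P j}"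
proof (induction k)
  case 0 then show ?case by simp
next
  case (Suc k)
  have eq: "{v. v < Suc k * l \<and> P (v mod l)} = {v. v < k * l \<and> P (v mod l)} \<union> (\<lambda>j. k * l + j) ` {j. j < l \<and> P j}"
  proof (rule set_eqI, rule iffI)
    fix v assume "v \<in> {v. v < Suc k * l \<and> P (v mod l)}"
    then have v: "v < k * l + l" "P (v mod l)" by auto
    show "v \<in> {v. v < k * l \<and> P (v mod l)} \<union> (\<lambda>j. k * l + j) ` {j. j < l \<and> P j}"
    proof (cases "v < k * l")
      case True then show ?thesis using v by auto
    next
      case False
      then obtain j where j: "v = k * l + j" by (metis le_iff_add not_less)
      then have "j < l" "v mod l = j" using v by auto
      then show ?thesis using v j by auto
    qed
  next
    fix v assume "v \<in> {v. v < k * l \<and> P (v mod l)} \<union> (\<lambda>j. k * l + j) ` {j. j < l \<and> P j}"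
    then show "v \<in> {v. v < Suc k * l \<and> P (v mod l)}" by auto
  qed
  have "card ({v. v < k * l \<and> P (v mod l)} \<union> (\<lambda>j. k * l + j) ` {j. j < l \<and> P j})
      = card {v. v < k * l \<and> P (v mod l)} + card ((\<lambda>j. k * l + j) ` {j. j < l \<and> P j})"
    by (rule card_Un_disjoint) auto
  also have "card ((\<lambda>j. k * l + j) ` {j. j < l \<and> P j}) = card {j. j < l \<and> P j}"
    by (rule card_image) (auto simp: inj_on_def)
  finally show ?case using eq Suc by simp
qed

lemma cyclic_count:
  assumes "0 < l" "odd l" "\<And>j. \<not> b (j mod l) \<Longrightarrow> b (Suc j mod l)"
  shows "l + 1 \<le> 2 * card {j. j < l \<and> b j}"
proof -
  let ?Z = "{j. j < l \<and> \<not> b j}" and ?B = "{j. j < l \<and> b j}"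
  have "card ?Z \<le> card ?B"
  proof (rule card_inj_on_le)
    show "inj_on (\<lambda>j. Suc j mod l) ?Z"
    proof (rule inj_onI)
      fix x y assume "x \<in> ?Z" "y \<in> ?Z" "Suc x mod l = Suc y mod l"
      then show "x = y"
        by (cases "Suc x = l"; cases "Suc y = l") auto
    qed
    show "(\<lambda>j. Suc j mod l) ` ?Z \<subseteq> ?B"
    proof
      fix y assume "y \<in> (\<lambda>j. Suc j mod l) ` ?Z"
      then obtain j where j: "j < l" "\<not> b j" "y = Suc j mod l" by auto
      then have "b y" using assms(3)[of j] by simp
      then show "y \<in> ?B" using j assms(1) by simp
    qed
    show "finite ?B" by simp
  qed
  moreover have "card ?Z + card ?B = l"
  proof -
    have "card (?Z \<union> ?B) = card ?Z + card ?B" by (rule card_Un_disjoint) auto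
    moreover have "?Z \<union> ?B = {..<l}" by auto
    ultimately show ?thesis by simp
  qed
  ultimately have "l \<le> 2 * card ?B" by linarith
  moreover have "l \<noteq> 2 * card ?B" using assms(2) by (metis dvd_triv_left)
  ultimately show ?thesis by linarith
qed

lemma sum_pow2_le: "(\<Sum>i\<le>s. (2::nat)^i) \<le> 2^(s+1)"
proof (induction s)
  case 0 then show ?case by simp
next
  case (Suc s)
  have "(\<Sum>i\<le>Suc s. (2::nat)^i) = (\<Sum>i\<le>s. (2::nat)^i) + 2^(Suc s)" by simp
  also have "\<dots> \<le> 2^(s+1) + 2^(s+1)" using Suc by simp
  also have "\<dots> = 2^(Suc s + 1)" by simp
  finally show ?case .
qed

lemma card_BB: "finite {(l::bool list, ob::bool list). length l \<le> s \<and> length ob = 2}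
   \<and> card {(l::bool list, ob::bool list). length l \<le> s \<and> length ob = 2} \<le> 2^(s+1) * 4"
proof -
  have eq: "{(l::bool list, ob::bool list). length l \<le> s \<and> length ob = 2}
      = {xs. set xs \<subseteq> (UNIV::bool set) \<and> length xs \<le> s} \<times> {xs. set xs \<subseteq> (UNIV::bool set) \<and> length xs = 2}"
    by auto
  have f1: "finite {xs. set xs \<subseteq> (UNIV::bool set) \<and> length xs \<le> s}" by (rule finite_lists_length_le) simp
  have f2: "finite {xs. set xs \<subseteq> (UNIV::bool set) \<and> length xs = 2}" by (rule finite_lists_length_eq) simp
  have c1: "card {xs. set xs \<subseteq> (UNIV::bool set) \<and> length xs \<le> s} \<le> 2^(s+1)"
    using card_lists_length_le[of "UNIV::bool set" s] sum_pow2_le[of s] by simp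
  have c2: "card {xs. set xs \<subseteq> (UNIV::bool set) \<and> length xs = 2} = 4"
    using card_lists_length_eq[of "UNIV::bool set" 2] by simp
  show ?thesis unfolding eq using f1 f2 c1 c2 by (simp add: card_cartesian_product)
qed

lemma num_bound:
  assumes "10000 \<le> \<kappa>" "real s \<le> ln (real \<kappa>) / 8"
  shows "(2::nat)^(2*s+6) \<le> \<kappa> - 1"
proof -
  have kpos: "0 < real \<kappa>" using assms by simp
  have lnk: "0 \<le> ln (real \<kappa>)" using assms by simp
  have ln4: "ln (4::real) \<le> 3" using ln_le_minus_one[of "4::real"] by simp
  have "ln ((4::real)^s) = real s * ln 4" by (simp add: ln_realpow)
  also have "\<dots> \<le> real s * 3" using ln4 by (intro mult_left_mono) auto
  also have "\<dots> \<le> ln (real \<kappa>) / 2" using assms(2) lnk by linarith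
  also have "\<dots> = ln (sqrt (real \<kappa>))" using kpos by (simp add: ln_sqrt)
  finally have "ln ((4::real)^s) \<le> ln (sqrt (real \<kappa>))" .
  then have p: "(4::real)^s \<le> sqrt (real \<kappa>)" using kpos by (simp add: ln_le_cancel_iff)
  have sq: "100 \<le> sqrt (real \<kappa>)" using assms(1) by (intro real_le_rsqrt) simp
  have "real \<kappa> = sqrt (real \<kappa>) * sqrt (real \<kappa>)" using kpos by simp
  moreover have "100 * sqrt (real \<kappa>) \<le> sqrt (real \<kappa>) * sqrt (real \<kappa>)"
    using sq by (intro mult_right_mono) auto
  ultimately have "real \<kappa> \<ge> 100 * sqrt (real \<kappa>)" by simp
  then have "64 * (4::real)^s \<le> real \<kappa> - 1" using p sq by linarith
  moreover have "real ((2::nat)^(2*s+6)) = 64 * (4::real)^s"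
    by (simp add: power_add power_mult)
  ultimately have "real ((2::nat)^(2*s+6)) \<le> real \<kappa> - 1" by simp
  moreover have "real \<kappa> - 1 = real (\<kappa> - 1)" using assms(1) by (simp add: of_nat_diff)
  ultimately have "real ((2::nat)^(2*s+6)) \<le> real (\<kappa> - 1)" by linarith
  then show ?thesis by (simp only: of_nat_le_iff)
qed

type_synonym node = "(bool list \<times> bool list) \<times> (bool list \<times> bool list)"

definition RR :: "verifier \<Rightarrow> node \<Rightarrow> node \<Rightarrow> bool" where
  "RR D x y \<longleftrightarrow> snd x = fst y \<and> D (snd (snd x)) (fst (snd x)) [fst (fst x), fst (snd y)] \<and>
     snd (snd x) ! 1 = snd (snd y) ! 0 \<and> (snd (snd x) ! 0 \<or> snd (snd x) ! 1)"

lemma io_config_eq: "io_config ec_input Out = Out"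
  by (simp add: io_config_def ec_input_def)

lemma no_instance:
  fixes q :: "nat \<Rightarrow> node"
  assumes k1: "1 \<le> \<kappa>" and ol: "odd l" and lk: "l + 1 \<le> \<kappa>"
    and Rq: "\<forall>i<l. RR D (q i) (q (Suc i))" and ql: "q l = q 0"
  shows "\<exists>V nb S L. ec_FN (2*\<kappa>+1) ((real \<kappa> + 1)/real \<kappa>) V nb S \<and> accepts D V nb S L"
proof -
  have l0: "0 < l" using ol by (cases l) auto
  define k where "k = 2 * \<kappa> + 3"
  define n where "n = k * l"
  have "k * 1 \<le> k * l" using l0 by (intro mult_le_mono2) simp
  then have kn: "k \<le> n" by (simp add: n_def)
  have n3: "3 \<le> n" and gn: "2 * \<kappa> + 1 \<le> n" using kn by (auto simp: k_def)
  have on: "odd n" using ol by (simp add: n_def k_def)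
  have n0: "0 < n" using n3 by simp
  have ldvd: "l dvd n" by (simp add: n_def)
  define gq where "gq j = q (j mod l)" for j
  have Rg: "RR D (gq j) (gq (Suc j))" for j
    unfolding gq_def using periodic_walk[OF l0 Rq ql] .
  have gmod: "gq (x mod n) = gq x" for x
    unfolding gq_def using ldvd by (simp add: mod_mod_cancel)
  define Out where "Out v = snd (snd (gq v))" for v
  define L where "L v = fst (snd (gq v))" for v
  define S where "S = io_config ec_input Out"
  have SO: "S = Out" by (simp add: S_def io_config_eq)
  have acc: "accepts D {..<n} (cnb n) S L"
    unfolding accepts_def
  proof
    fix v assume "v \<in> {..<n}"
    then have v: "v < n" by simp
    have scv: "sc n v = Suc v mod n" using sc_mod[OF n0, of v] v by simp
    have "L (sc n v) = fst (snd (gq (Suc v)))" using gmod scv by (simp add: L_def)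
    moreover have "L (pr n v) = fst (fst (gq v))"
    proof -
      have "sc n (pr n v) = v" using sc_pr v by simp
      moreover have "sc n (pr n v) = Suc (pr n v) mod n" using sc_mod[OF n0, of "pr n v"] pr_lt[OF v] by simp
      ultimately have "gq (Suc (pr n v)) = gq v" using gmod by metis
      moreover have "snd (gq (pr n v)) = fst (gq (Suc (pr n v)))" using Rg unfolding RR_def by blast
      ultimately show ?thesis by (simp add: L_def)
    qed
    moreover have "D (Out v) (L v) [fst (fst (gq v)), fst (snd (gq (Suc v)))]"
      using Rg[of v] unfolding RR_def Out_def L_def by blast
    ultimately show "D (S v) (L v) (map L (cnb n v))" by (simp add: SO cnb_def)
  qed
  define b where "b j = snd (snd (q j)) ! 1" for j
  have bstep: "b (Suc j mod l)" if "\<not> b (j mod l)" for j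
  proof -
    have "snd (snd (gq j)) ! 1 = snd (snd (gq (Suc j))) ! 0" using Rg[of j] unfolding RR_def by blast
    moreover have "snd (snd (gq (Suc j))) ! 0 \<or> snd (snd (gq (Suc j))) ! 1" using Rg[of "Suc j"] unfolding RR_def by blast
    ultimately show ?thesis using that by (simp add: b_def gq_def)
  qed
  have cB: "l + 1 \<le> 2 * card {j. j < l \<and> b j}" by (rule cyclic_count[where b=b, OF l0 ol bstep])
  have "card {v. v < n \<and> Out v ! 1} = card {v. v < k * l \<and> b (v mod l)}"
    by (simp add: n_def Out_def gq_def b_def)
  also have "\<dots> = k * card {j. j < l \<and> b j}" by (rule card_periodic)
  finally have "k * card {j. j < l \<and> b j} \<le> ec_f {..<n} (cnb n) Out"
    using ec_f_lower[OF n3, of Out] by simp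
  then have f2: "k * (l + 1) \<le> 2 * ec_f {..<n} (cnb n) Out"
  proof -
    have "k * (l + 1) \<le> k * (2 * card {j. j < l \<and> b j})" using cB by (rule mult_le_mono2)
    also have "\<dots> = 2 * (k * card {j. j < l \<and> b j})" by simp
    finally show ?thesis using \<open>k * card {j. j < l \<and> b j} \<le> ec_f {..<n} (cnb n) Out\<close> by linarith
  qed
  have o2: "2 * ec_OPT {..<n} (cnb n) \<le> k * l + 1"
  proof -
    have "2 * ((n + 1) div 2) = n + 1" using on by simp
    then show ?thesis using OPT_le[OF n3] by (simp add: n_def)
  qed
  define f where "f = ec_f {..<n} (cnb n) Out"
  define Op where "Op = ec_OPT {..<n} (cnb n)"
  have key: "(\<kappa> + 1) * (k * l + 1) < \<kappa> * (k * (l + 1))"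
  proof -
    have "k * (l + 1) \<le> k * \<kappa>" using lk by (rule mult_le_mono2)
    then have a: "k * l + k \<le> k * \<kappa>" by (simp add: algebra_simps)
    have b: "\<kappa> + 1 < k" by (simp add: k_def)
    have "(\<kappa> + 1) * (k * l + 1) = \<kappa> * (k * l) + (k * l + \<kappa> + 1)" by (simp add: algebra_simps)
    also have "\<dots> < \<kappa> * (k * l) + k * \<kappa>" using a b by linarith
    also have "\<dots> = \<kappa> * (k * (l + 1))" by (simp add: algebra_simps)
    finally show ?thesis .
  qed
  have "(\<kappa> + 1) * (2 * Op) \<le> (\<kappa> + 1) * (k * l + 1)" using o2 unfolding Op_def by (rule mult_le_mono2)
  then have "2 * ((\<kappa> + 1) * Op) \<le> (\<kappa> + 1) * (k * l + 1)" by (simp add: algebra_simps)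
  also have "\<dots> < \<kappa> * (k * (l + 1))" by (rule key)
  also have "\<dots> \<le> 2 * (\<kappa> * f)" using f2 by (simp add: f_def)
  finally have "(\<kappa> + 1) * Op < \<kappa> * f" by simp
  then have "real (\<kappa> + 1) * real Op < real \<kappa> * real f" by (metis of_nat_less_iff of_nat_mult)
  then have lt: "(real \<kappa> + 1) / real \<kappa> * real Op < real f"
    using k1 by (simp add: divide_less_eq mult.commute add.commute)
  have FN: "ec_FN (2*\<kappa>+1) ((real \<kappa> + 1)/real \<kappa>) {..<n} (cnb n) S"
    unfolding ec_FN_def
  proof (intro exI conjI)
    show "S = io_config ec_input Out" by (simp add: S_def)
    show "ec_universe (2 * \<kappa> + 1) {..<n} (cnb n) Out"
      unfolding ec_universe_def using cyc_port_graph[OF n3] cyc_odd_girth[OF n3 gn] cyc_legal[OF n3] by blast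
    show "\<not> (ec_feasible {..<n} (cnb n) Out \<and> real (ec_f {..<n} (cnb n) Out) \<le> (real \<kappa> + 1) / real \<kappa> * real (ec_OPT {..<n} (cnb n)))"
      using lt by (simp add: f_def Op_def)
  qed
  show ?thesis using FN acc by blast
qed

lemma yes_walk:
  assumes k1: "1 \<le> \<kappa>" and apls: "ec_APLS (2*\<kappa>+1) \<alpha> P D"
    and len: "\<And>V nb S v. ec_FY (2*\<kappa>+1) V nb S \<Longrightarrow> v \<in> V \<Longrightarrow> length (P V nb S v) \<le> s"
  shows "\<exists>q l. odd l \<and> l \<le> 2^(2*s+6) \<and> (\<forall>i<l. RR D (q i) (q (Suc i))) \<and> q l = q 0"
proof -
  define N where "N = 2 * \<kappa> + 1"
  have N3: "3 \<le> N" using k1 by (simp add: N_def)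
  have N0: "0 < N" using N3 by simp
  have "{ec_f {..<N} (cnb N) Out | Out. ec_feasible {..<N} (cnb N) Out} \<noteq> {}"
    using Out0_feasible[OF N3] by blast
  then have "ec_OPT {..<N} (cnb N) \<in> {ec_f {..<N} (cnb N) Out | Out. ec_feasible {..<N} (cnb N) Out}"
    unfolding ec_OPT_def by (rule Inf_nat_def1)
  then obtain Out where feas: "ec_feasible {..<N} (cnb N) Out" and opt: "ec_f {..<N} (cnb N) Out = ec_OPT {..<N} (cnb N)"
    by (auto simp only: mem_Collect_eq)
  define S where "S = io_config ec_input Out"
  have SO: "S = Out" by (simp add: S_def io_config_eq)
  have FY: "ec_FY (2*\<kappa>+1) {..<N} (cnb N) S"
    unfolding ec_FY_def
  proof (intro exI conjI)
    show "S = io_config ec_input Out" by (simp add: S_def)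
    show "ec_universe (2 * \<kappa> + 1) {..<N} (cnb N) Out"
      unfolding ec_universe_def using cyc_port_graph[OF N3] cyc_odd_girth[OF N3, of "2*\<kappa>+1"] cyc_legal[OF N3]
      by (simp add: N_def)
  qed (rule feas, rule opt)
  define L where "L = P {..<N} (cnb N) S"
  have acc: "accepts D {..<N} (cnb N) S L"
  proof -
    have "\<forall>V nb S. ec_FY (2*\<kappa>+1) V nb S \<longrightarrow> accepts D V nb S (P V nb S)"
      using apls unfolding ec_APLS_def gpls_def by (rule conjunct1)
    then show ?thesis using FY unfolding L_def by blast
  qed
  have Lv: "length (L v) \<le> s" if "v < N" for v
    using len[OF FY] that by (simp add: L_def)
  define T where "T v = (L v, Out v)" for v
  define w where "w i = (T (pr N (i mod N)), T (i mod N))" for i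
  define BB where "BB = {(l::bool list, ob::bool list). length l \<le> s \<and> length ob = 2}"
  define AA where "AA = BB \<times> BB"
  have fBB: "finite BB" and cBB: "card BB \<le> 2^(s+1) * 4" using card_BB[of s] by (auto simp: BB_def)
  have fAA: "finite AA" using fBB by (simp add: AA_def)
  have "card AA = card BB * card BB" by (simp add: AA_def card_cartesian_product)
  also have "\<dots> \<le> (2^(s+1) * 4) * (2^(s+1) * 4)" using cBB by (intro mult_le_mono) auto
  also have "\<dots> = 2^(2*s+6)"
  proof -
    have e1: "(2::nat)^(s+1) * 4 = 2^(s+3)" by (simp add: power_add)
    have e2: "(2::nat)^(s+3) * 2^(s+3) = 2^((s+3)+(s+3))" by (simp only: power_add)
    have e3: "(s+3)+(s+3) = 2*s+6" by simp
    show ?thesis by (simp only: e1 e2 e3)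
  qed
  finally have cAA: "card AA \<le> 2^(2*s+6)" .
  have TB: "T v \<in> BB" if "v < N" for v
    using Lv[OF that] feas_props(1)[OF feas that] by (simp add: T_def BB_def)
  have wA: "\<forall>i\<le>N. w i \<in> AA"
  proof (intro allI impI)
    fix i
    have m: "i mod N < N" using N0 by simp
    then have "pr N (i mod N) < N" by (rule pr_lt)
    then show "w i \<in> AA" using TB[OF m] TB[of "pr N (i mod N)"] by (simp add: w_def AA_def)
  qed
  have wR: "\<forall>i<N. RR D (w i) (w (Suc i))"
  proof (intro allI impI)
    fix i assume "i < N"
    define v where "v = i mod N"
    have v: "v < N" using N0 by (simp add: v_def)
    have scv: "sc N v = Suc i mod N" using sc_mod[OF N0] by (simp add: v_def)
    have prv: "pr N (Suc i mod N) = v" using pr_mod[OF N0] by (simp add: v_def)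
    have Dv: "D (Out v) (L v) [L (pr N v), L (sc N v)]"
      using acc v unfolding accepts_def by (simp add: SO cnb_def)
    have c1: "Out v ! 1 = Out (sc N v) ! 0" and c2: "Out v ! 0 \<or> Out v ! 1"
      using feas_props[OF feas v] by auto
    show "RR D (w i) (w (Suc i))"
    proof -
      have w1: "w i = ((L (pr N v), Out (pr N v)), (L v, Out v))" by (simp add: w_def T_def v_def)
      have w2: "w (Suc i) = ((L v, Out v), (L (sc N v), Out (sc N v)))" by (simp add: w_def T_def prv scv)
      show ?thesis unfolding RR_def w1 w2 using Dv c1 c2 by simp
    qed
  qed
  have wN: "w N = w 0" by (simp add: w_def)
  have oN: "odd N" by (simp add: N_def)
  obtain q l where "odd l" "l \<le> card AA" "\<forall>i<l. RR D (q i) (q (Suc i))" "q l = q 0"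
    using odd_walk_short[OF fAA wA wR wN oN] by blast
  then show ?thesis using cAA by (intro exI[of _ q] exI[of _ l]) auto
qed

theorem theorem5p9:
  shows "\<exists>c::real > 0. \<exists>K::nat. \<forall>\<kappa>::nat. \<kappa> \<ge> 1 \<and> \<kappa> \<ge> K \<longrightarrow>
     (\<forall>P D. ec_APLS (2 * \<kappa> + 1) ((real \<kappa> + 1) / real \<kappa>) P D \<longrightarrow>
        ereal (c * ln (real \<kappa>)) \<le> proof_size (ec_FY (2 * \<kappa> + 1)) P)"
proof (intro exI[of _ "1/8::real"] conjI exI[of _ "10000::nat"] allI impI)
  show "(0::real) < 1/8" by simp
  fix \<kappa> :: nat and P D
  assume k: "1 \<le> \<kappa> \<and> 10000 \<le> \<kappa>"
  assume apls: "ec_APLS (2 * \<kappa> + 1) ((real \<kappa> + 1) / real \<kappa>) P D"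
  show "ereal (1/8 * ln (real \<kappa>)) \<le> proof_size (ec_FY (2 * \<kappa> + 1)) P"
  proof (rule ccontr)
    assume "\<not> ereal (1/8 * ln (real \<kappa>)) \<le> proof_size (ec_FY (2 * \<kappa> + 1)) P"
    then have lt: "proof_size (ec_FY (2 * \<kappa> + 1)) P < ereal (1/8 * ln (real \<kappa>))" by simp
    define s where "s = nat \<lfloor>1/8 * ln (real \<kappa>)\<rfloor>"
    have lnpos: "0 \<le> 1/8 * ln (real \<kappa>)" using k by simp
    have len: "length (P V nb S v) \<le> s" if "ec_FY (2*\<kappa>+1) V nb S" "v \<in> V" for V nb S v
    proof -
      have "ereal (real (length (P V nb S v))) \<le> proof_size (ec_FY (2 * \<kappa> + 1)) P"
        unfolding proof_size_def
        by (rule SUP_upper2[of "(V, nb, S, v)"]) (use that in auto)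
      then have "ereal (real (length (P V nb S v))) < ereal (1/8 * ln (real \<kappa>))"
        using lt by (rule le_less_trans)
      then have "real (length (P V nb S v)) \<le> 1/8 * ln (real \<kappa>)" by simp
      then show ?thesis unfolding s_def by (rule le_nat_floor)
    qed
    have sb: "real s \<le> ln (real \<kappa>) / 8" using of_nat_floor[OF lnpos] by (simp add: s_def)
    obtain q l where ql: "odd l" "l \<le> 2^(2*s+6)" "\<forall>i<l. RR D (q i) (q (Suc i))" "q l = q 0"
      using yes_walk[of \<kappa> _ P D s, OF _ apls len] k by blast
    have "l \<le> \<kappa> - 1" using ql(2) num_bound[OF _ sb] k by linarith
    then have lk: "l + 1 \<le> \<kappa>" using k by linarith
    obtain V nb S L where FN: "ec_FN (2*\<kappa>+1) ((real \<kappa> + 1)/real \<kappa>) V nb S" and acc: "accepts D V nb S L"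
      using no_instance[OF _ ql(1) lk ql(3) ql(4)] k by blast
    show False using apls FN acc unfolding ec_APLS_def gpls_def by blast
  qed
qed

end
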